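(* Let $X$ be a compact Hausdorff space, $\mathcal{A}$ a unital $C^*$-algebra with unit $1$, and $\mathcal{E}$ a $*$-subalgebra of $C(X,\mathcal{A})$. Then the constant function $1_X\equiv 1$ belongs to the uniform closure $\bar{\mathcal{E}}$ of $\mathcal{E}$ iff for every $x\in X$ there is $f\in\mathcal{E}$ such that $f(x)$ is invertible in $\mathcal{A}$.
   Context: $C(X,\mathcal{A})$ is the $C^*$-algebra of continuous maps $X\to\mathcal{A}$ with pointwise operations and supremum norm. *)

theory Defs
  imports "HOL-Analysis.Analysis"
begin

class cstar_algebra = real_normed_algebra + ring_1 + banach +
  fixes scaleC :: "complex \<Rightarrow> 'a \<Rightarrow> 'a"
    and cstar :: "'a \<Rightarrow> 'a"
  assumes scaleC_add_right: "scaleC c (x + y) = scaleC c x + scaleC c y"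
    and scaleC_add_left: "scaleC (c + d) x = scaleC c x + scaleC d x"
    and scaleC_scaleC: "scaleC c (scaleC d x) = scaleC (c * d) x"
    and scaleC_one: "scaleC 1 x = x"
    and scaleC_of_real: "scaleC (complex_of_real r) x = scaleR r x"
    and scaleC_mult_left: "scaleC c x * y = scaleC c (x * y)"
    and scaleC_mult_right: "x * scaleC c y = scaleC c (x * y)"
    and norm_scaleC: "norm (scaleC c x) = cmod c * norm x"
    and cstar_cstar: "cstar (cstar x) = x"
    and cstar_add: "cstar (x + y) = cstar x + cstar y"
    and cstar_mult: "cstar (x * y) = cstar y * cstar x"
    and cstar_scaleC: "cstar (scaleC c x) = scaleC (cnj c) (cstar x)"
    and cstar_identity: "norm (cstar x * x) = norm x ^ 2"

definition invertible_el :: "'a::ring_1 \<Rightarrow> bool" where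
  "invertible_el a \<longleftrightarrow> (\<exists>b. a * b = 1 \<and> b * a = 1)"

text \<open>*-subalgebras of C(X,A): sets of continuous maps closed under the pointwise
algebra operations and involution (values outside topspace X are irrelevant).\<close>

definition star_subalgebra :: "'x topology \<Rightarrow> ('x \<Rightarrow> 'a::cstar_algebra) set \<Rightarrow> bool" where
  "star_subalgebra X E \<longleftrightarrow>
     (\<forall>f\<in>E. continuous_map X euclidean f) \<and>
     (\<lambda>x. 0) \<in> E \<and>
     (\<forall>f\<in>E. \<forall>g\<in>E. (\<lambda>x. f x + g x) \<in> E) \<and>
     (\<forall>f\<in>E. \<forall>g\<in>E. (\<lambda>x. f x * g x) \<in> E) \<and>
     (\<forall>c. \<forall>f\<in>E. (\<lambda>x. scaleC c (f x)) \<in> E) \<and>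
     (\<forall>f\<in>E. (\<lambda>x. cstar (f x)) \<in> E)"

definition uniform_closure :: "'x topology \<Rightarrow> ('x \<Rightarrow> 'a::real_normed_vector) set \<Rightarrow> ('x \<Rightarrow> 'a) set" where
  "uniform_closure X E = {g. \<forall>e>0. \<exists>f\<in>E. \<forall>x\<in>topspace X. norm (f x - g x) \<le> e}"

end

theory Submission
  imports Defs
begin


lemma cstar_one: "cstar 1 = (1::'a::cstar_algebra)"
proof -
  have "cstar (cstar 1) = cstar (1 * cstar (1::'a))" by simp
  also have "\<dots> = cstar (cstar 1) * cstar 1" by (rule cstar_mult)
  finally have "1 = 1 * cstar (1::'a)" by (simp only: cstar_cstar)
  then have "1 = cstar (1::'a)" by (simp only: mult_1_left)
  then show ?thesis by (rule sym)
qed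

lemma norm_one_cstar: "norm (1::'a::cstar_algebra) = 1"
proof -
  have "norm (1::'a) ^ 2 = norm (cstar 1 * (1::'a))" by (rule cstar_identity[symmetric])
  then have h0: "norm (1::'a) * norm (1::'a) = norm (1::'a)" by (simp add: cstar_one power2_eq_square)
  have nz: "norm (1::'a) \<noteq> 0" by simp
  show ?thesis using h0 nz by simp
qed

lemma norm_power_le: "norm ((x::'a::cstar_algebra) ^ n) \<le> norm x ^ n"
proof (induct n)
  case 0 then show ?case by (simp add: norm_one_cstar)
next
  case (Suc n)
  have "norm (x ^ Suc n) \<le> norm x * norm (x ^ n)" by (simp add: norm_mult_ineq)
  also have "\<dots> \<le> norm x * norm x ^ n" by (rule mult_left_mono[OF Suc norm_ge_zero])
  finally show ?case by simp
qed

definition cj :: "complex \<Rightarrow> 'a::cstar_algebra" where "cj c = scaleC c 1"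

lemma scaleC_cj: "scaleC c x = cj c * (x::'a::cstar_algebra)"
  by (simp add: cj_def scaleC_mult_left)

lemma cj_comm: "cj c * (x::'a::cstar_algebra) = x * cj c"
  by (simp add: cj_def scaleC_mult_left scaleC_mult_right)

lemma cj_add: "cj (c + d) = (cj c + cj d :: 'a::cstar_algebra)"
  by (simp add: cj_def scaleC_add_left)

lemma cj_mult: "cj (c * d) = (cj c * cj d :: 'a::cstar_algebra)"
  by (simp add: cj_def scaleC_mult_left scaleC_scaleC)

lemma cj_one [simp]: "cj 1 = (1::'a::cstar_algebra)"
  by (simp add: cj_def scaleC_one)

lemma cj_zero [simp]: "cj 0 = (0::'a::cstar_algebra)"
proof -
  have "cj (0+0) = (cj 0 + cj 0 :: 'a)" by (rule cj_add)
  then show ?thesis by simp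
qed

lemma cj_minus: "cj (- c) = (- cj c :: 'a::cstar_algebra)"
proof -
  have "cj (c + - c) = (cj c + cj (-c) :: 'a)" by (rule cj_add)
  then show ?thesis by (simp add: eq_neg_iff_add_eq_0 add.commute)
qed

lemma cj_diff: "cj (c - d) = (cj c - cj d :: 'a::cstar_algebra)"
proof -
  have "cj (c - d) = (cj (c + - d) :: 'a)" by simp
  also have "\<dots> = cj c + - cj d" by (simp only: cj_add cj_minus)
  finally show ?thesis by simp
qed

lemma cj_of_real: "cj (complex_of_real r) = (scaleR r 1 :: 'a::cstar_algebra)"
  by (simp only: cj_def scaleC_of_real)

lemma scaleR_of_nat_one: "scaleR (real n) 1 = (of_nat n :: 'a::cstar_algebra)"
  by (induct n) (simp_all add: scaleR_add_left)

lemma cj_of_nat: "cj (of_nat n) = (of_nat n :: 'a::cstar_algebra)"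
  using cj_of_real[of "real n"] scaleR_of_nat_one[of n] by (metis of_real_of_nat_eq)

lemma norm_cj: "norm (cj c :: 'a::cstar_algebra) = cmod c"
  by (simp add: cj_def norm_scaleC norm_one_cstar)

lemma cstar_cj: "cstar (cj c :: 'a::cstar_algebra) = cj (cnj c)"
  by (simp add: cj_def cstar_scaleC cstar_one)

lemma cj_power: "cj (c ^ n) = (cj c ^ n :: 'a::cstar_algebra)"
  by (induct n) (simp_all add: cj_mult)

lemma cj_sum: "cj (sum f A) = (sum (\<lambda>i. cj (f i)) A :: 'a::cstar_algebra)"
  by (induct A rule: infinite_finite_induct) (simp_all add: cj_add)

lemma cj_mult_power: "(cj c * x) ^ n = cj (c ^ n) * (x::'a::cstar_algebra) ^ n"
proof (induct n)
  case 0 then show ?case by simp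
next
  case (Suc n)
  have "(cj c * x) ^ Suc n = (cj c * x) * (cj (c ^ n) * x ^ n)" using Suc by simp
  also have "\<dots> = (cj c * cj (c^n)) * (x * x ^ n)"
    by (metis cj_comm mult.assoc)
  finally show ?case by (simp add: cj_mult)
qed

lemma cstar_zero [simp]: "cstar (0::'a::cstar_algebra) = 0"
  using cstar_add[of "0::'a" 0] by simp

lemma cstar_minus: "cstar (- x) = - cstar (x::'a::cstar_algebra)"
  using cstar_add[of x "-x"] by (simp add: eq_neg_iff_add_eq_0 add.commute)

lemma cstar_diff: "cstar (x - y) = cstar x - cstar (y::'a::cstar_algebra)"
  using cstar_add[of x "-y"] cstar_minus[of y] by simp

lemma cstar_power: "cstar (x ^ n) = cstar (x::'a::cstar_algebra) ^ n"
proof (induct n)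
  case 0 then show ?case by (simp add: cstar_one)
next
  case (Suc n)
  have "cstar (x ^ Suc n) = cstar (x ^ n * x)" by (simp only: power_Suc2)
  also have "\<dots> = cstar x * cstar x ^ n" by (simp add: cstar_mult Suc)
  finally show ?case by simp
qed

lemma norm_cstar_le: "norm (cstar x) \<le> norm (x::'a::cstar_algebra)"
proof (cases "x = 0")
  case True then show ?thesis by simp
next
  case False
  have "norm (cstar x) ^ 2 = norm (cstar (cstar x) * cstar x)" by (rule cstar_identity[symmetric])
  also have "\<dots> = norm (x * cstar x)" by (simp add: cstar_cstar)
  also have "\<dots> \<le> norm x * norm (cstar x)" by (rule norm_mult_ineq)
  finally have "norm (cstar x) * norm (cstar x) \<le> norm x * norm (cstar x)" by (simp add: power2_eq_square)
  then show ?thesis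
    by (metis mult_right_le_imp_le norm_ge_zero order.order_iff_strict mult_le_cancel_right norm_zero zero_less_norm_iff) 
qed

lemma norm_cstar: "norm (cstar x) = norm (x::'a::cstar_algebra)"
  using norm_cstar_le[of x] norm_cstar_le[of "cstar x"] by (simp add: cstar_cstar)

lemma norm_sa_square: "cstar x = x \<Longrightarrow> norm (x * x) = norm (x::'a::cstar_algebra) ^ 2"
  using cstar_identity[of x] by simp

lemma norm_sa_pow2: "cstar x = x \<Longrightarrow> norm (x ^ (2 ^ k)) = norm (x::'a::cstar_algebra) ^ (2 ^ k)"
proof (induct k)
  case 0 then show ?case by simp
next
  case (Suc k)
  have sa: "cstar (x ^ 2 ^ k) = x ^ 2 ^ k" by (simp add: cstar_power Suc.prems)
  have "x ^ (2 ^ Suc k) = x ^ 2 ^ k * x ^ 2 ^ k" by (simp add: power_add[symmetric] mult_2)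
  then have "norm (x ^ (2 ^ Suc k)) = norm (x ^ 2 ^ k) ^ 2" using norm_sa_square[OF sa] by simp
  then show ?case using Suc by (simp add: power_mult[symmetric] mult.commute)
qed



lemma inv_unique: "a * b = 1 \<Longrightarrow> c * a = 1 \<Longrightarrow> b = (c::'a::ring_1)"
  by (metis mult.assoc mult_1_left mult_1_right)

lemma invertible_el_one [simp]: "invertible_el (1::'a::ring_1)"
  unfolding invertible_el_def by (rule exI[of _ 1]) simp

lemma invertible_el_mult:
  assumes "invertible_el (a::'a::ring_1)" "invertible_el b" shows "invertible_el (a * b)"
proof -
  obtain a' where a: "a * a' = 1" "a' * a = 1" using assms(1) unfolding invertible_el_def by blast
  obtain b' where b: "b * b' = 1" "b' * b = 1" using assms(2) unfolding invertible_el_def by blast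
  have "a * b * (b' * a') = a * (b * b') * a'" by (simp add: mult.assoc)
  moreover have "b' * a' * (a * b) = b' * (a' * a) * b" by (simp add: mult.assoc)
  ultimately show ?thesis unfolding invertible_el_def using a b by (intro exI[of _ "b' * a'"]) simp
qed

lemma invertible_el_minus:
  assumes "invertible_el (a::'a::ring_1)" shows "invertible_el (- a)"
  using assms unfolding invertible_el_def by (metis minus_mult_minus)

lemma invertible_cj: "c \<noteq> 0 \<Longrightarrow> invertible_el (cj c :: 'a::cstar_algebra)"
  unfolding invertible_el_def
  by (rule exI[of _ "cj (1/c)"]) (simp add: cj_mult[symmetric])

lemma invertible_cstar:
  assumes "invertible_el (a::'a::cstar_algebra)" shows "invertible_el (cstar a)"
proof -
  obtain a' where a: "a * a' = 1" "a' * a = 1" using assms unfolding invertible_el_def by blast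
  have "cstar a * cstar a' = 1" using a(2) by (metis cstar_mult cstar_one)
  moreover have "cstar a' * cstar a = 1" using a(1) by (metis cstar_mult cstar_one)
  ultimately show ?thesis unfolding invertible_el_def by blast
qed

lemma telescope_left: "(1 - y) * (\<Sum>i<n. y ^ i) = 1 - (y::'a::ring_1) ^ n"
proof (induct n)
  case 0 then show ?case by simp
next
  case (Suc n)
  have "(1 - y) * (\<Sum>i<Suc n. y^i) = (1-y)*(\<Sum>i<n. y^i) + (1-y)*y^n" by (simp add: distrib_left)
  also have "\<dots> = 1 - y^n + (y^n - y * y^n)" by (simp only: Suc) (simp add: algebra_simps)
  finally show ?case by simp
qed

lemma telescope_right: "(\<Sum>i<n. y ^ i) * (1 - y) = 1 - (y::'a::ring_1) ^ n"
proof (induct n)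
  case 0 then show ?case by simp
next
  case (Suc n)
  have "(\<Sum>i<Suc n. y^i) * (1 - y) = (\<Sum>i<n. y^i)*(1-y) + y^n*(1-y)" by (simp add: distrib_right)
  also have "\<dots> = 1 - y^n + (y^n - y^n * y)" by (simp only: Suc) (simp add: algebra_simps)
  finally show ?case by (simp add: power_Suc2 del: power_Suc)
qed

lemma neumann:
  assumes y: "norm (y::'a::cstar_algebra) < 1" shows "invertible_el (1 - y)"
proof -
  have sg: "summable (\<lambda>n. norm y ^ n)" using y by (simp add: summable_geometric)
  have sm: "summable (\<lambda>n. y ^ n)"
    by (rule summable_comparison_test[OF _ sg]) (auto intro: norm_power_le)
  define s where "s = suminf (\<lambda>n. y ^ n)"
  have S: "(\<lambda>n. \<Sum>i<n. y ^ i) \<longlonglongrightarrow> s" unfolding s_def by (rule summable_LIMSEQ[OF sm])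
  have z: "(\<lambda>n. y ^ n) \<longlonglongrightarrow> 0"
  proof (rule Lim_null_comparison)
    show "\<forall>\<^sub>F n in sequentially. norm (y ^ n) \<le> norm y ^ n" by (intro always_eventually allI norm_power_le)
    show "(\<lambda>n. norm y ^ n) \<longlonglongrightarrow> 0" using y by (intro LIMSEQ_power_zero) simp
  qed
  have l1: "(\<lambda>n. (1 - y) * (\<Sum>i<n. y ^ i)) \<longlonglongrightarrow> (1 - y) * s" by (rule tendsto_mult_left[OF S])
  have l2: "(\<lambda>n. (1 - y) * (\<Sum>i<n. y ^ i)) \<longlonglongrightarrow> 1 - 0"
    unfolding telescope_left by (intro tendsto_diff tendsto_const z)
  have r1: "(\<lambda>n. (\<Sum>i<n. y ^ i) * (1 - y)) \<longlonglongrightarrow> s * (1 - y)" by (rule tendsto_mult_right[OF S])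
  have r2: "(\<lambda>n. (\<Sum>i<n. y ^ i) * (1 - y)) \<longlonglongrightarrow> 1 - 0"
    unfolding telescope_right by (intro tendsto_diff tendsto_const z)
  have "(1 - y) * s = 1" using LIMSEQ_unique[OF l1 l2] by simp
  moreover have "s * (1 - y) = 1" using LIMSEQ_unique[OF r1 r2] by simp
  ultimately show ?thesis unfolding invertible_el_def by blast
qed

lemma invertible_big:
  assumes "norm (x::'a::cstar_algebra) < cmod s" shows "invertible_el (x - cj s)"
proof -
  have s0: "s \<noteq> 0" using assms by auto
  have "norm (cj (1/s) * x) \<le> cmod (1/s) * norm x"
    using norm_mult_ineq[of "cj (1/s)" x] by (simp add: norm_cj)
  also have "\<dots> < 1" using assms s0 by (simp add: norm_divide field_simps)
  finally have "invertible_el (1 - cj (1/s) * x)" by (rule neumann)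
  then have "invertible_el (- (cj s * (1 - cj (1/s) * x)))"
    by (intro invertible_el_minus invertible_el_mult invertible_cj s0)
  moreover have "- (cj s * (1 - cj (1/s) * x)) = x - cj s"
    using s0 by (simp add: algebra_simps mult.assoc[symmetric] cj_mult[symmetric])
  ultimately show ?thesis by simp
qed

lemma arens:
  assumes sa: "cstar b = (b::'a::cstar_algebra)" and im: "Im s \<noteq> 0"
  shows "invertible_el (b - cj s)"
proof (rule ccontr)
  assume ni: "\<not> invertible_el (b - cj s)"
  define t where "t = (norm b ^ 2 + 1) / (2 * Im s)"
  define c where "c = b + cj (\<i> * complex_of_real t)"
  have "b - cj s = c - cj (s + \<i> * complex_of_real t)" unfolding c_def by (simp add: cj_add)
  then have ni2: "\<not> invertible_el (c - cj (s + \<i> * complex_of_real t))" using ni by simp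
  have le1: "cmod (s + \<i> * complex_of_real t) \<le> norm c" using invertible_big ni2 by force
  have "cstar c = b + cj (- (\<i> * complex_of_real t))" unfolding c_def by (simp add: cstar_add sa cstar_cj)
  then have "cstar c * c = b * b + (cj (- (\<i> * complex_of_real t)) * b + b * cj (\<i> * complex_of_real t))
      + cj (- (\<i> * complex_of_real t)) * cj (\<i> * complex_of_real t)"
    unfolding c_def by (simp add: algebra_simps)
  also have "cj (- (\<i> * complex_of_real t)) * b + b * cj (\<i> * complex_of_real t) = 0"
    by (simp add: cj_minus cj_comm)
  also have "cj (- (\<i> * complex_of_real t)) * cj (\<i> * complex_of_real t) = (cj (complex_of_real (t^2)) :: 'a)"
  proof -
    have "- (\<i> * complex_of_real t) * (\<i> * complex_of_real t) = complex_of_real (t^2)"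
      by (simp add: complex_eq_iff power2_eq_square)
    then show ?thesis by (simp only: cj_mult[symmetric])
  qed
  finally have cc: "cstar c * c = b * b + cj (complex_of_real (t^2))" by simp
  have "norm c ^ 2 = norm (cstar c * c)" by (simp add: cstar_identity)
  also have "\<dots> \<le> norm (b * b) + t ^ 2" unfolding cc
    using norm_triangle_ineq[of "b*b" "cj (complex_of_real (t^2)) :: 'a"] by (simp add: norm_cj norm_power)
  also have "\<dots> = norm b ^ 2 + t ^ 2" by (simp add: norm_sa_square sa)
  finally have le2: "norm c ^ 2 \<le> norm b ^ 2 + t ^ 2" .
  have "cmod (s + \<i> * complex_of_real t) ^ 2 \<le> norm c ^ 2"
    using le1 by (simp add: power_mono)
  moreover have "cmod (s + \<i> * complex_of_real t) ^ 2 = Re s ^ 2 + (Im s + t) ^ 2"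
    by (simp add: cmod_power2)
  ultimately have "Re s ^ 2 + (Im s + t) ^ 2 \<le> norm b ^ 2 + t ^ 2" using le2 by simp
  moreover have "(Im s + t)^2 = Im s^2 + 2*Im s*t + t^2" by (simp add: power2_sum)
  ultimately have "2 * Im s * t \<le> norm b ^ 2"
    using zero_le_power2[of "Re s"] zero_le_power2[of "Im s"] by linarith
  moreover have "2 * Im s * t = norm b ^ 2 + 1" unfolding t_def using im by simp
  ultimately show False by simp
qed



lemma resolvent_identity:
  fixes W :: "'a::cstar_algebra"
  assumes m: "(1 - cj m * W) * Rm = 1" "Rm * (1 - cj m * W) = 1"
      and n: "(1 - cj n * W) * Rn = 1" "Rn * (1 - cj n * W) = 1"
  shows "Rn - Rm = Rm * (cj (n - m) * W) * Rn"
proof -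
  have "(1 - cj m * W) - (1 - cj n * W) = cj (n - m) * W" by (simp add: cj_diff algebra_simps)
  then have "Rm * (cj (n - m) * W) * Rn = Rm * ((1 - cj m * W) - (1 - cj n * W)) * Rn" by simp
  also have "\<dots> = (Rm * (1 - cj m * W)) * Rn - Rm * ((1 - cj n * W) * Rn)"
    by (simp add: algebra_simps)
  also have "\<dots> = Rn - Rm" using m n by simp
  finally show ?thesis by simp
qed

lemma norm_cj_mult: "norm (cj c * x) \<le> cmod c * norm (x::'a::cstar_algebra)"
  using norm_mult_ineq[of "cj c" x] by (simp add: norm_cj)

lemma norm_cj_mult_eq: "norm (cj c * x) = cmod c * norm (x::'a::cstar_algebra)"
  by (simp add: scaleC_cj[symmetric] norm_scaleC)

lemma resolvent_cont:
  fixes W :: "'a::cstar_algebra"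
  assumes RR: "\<And>m. m \<in> S \<Longrightarrow> (1 - cj m * W) * R m = 1 \<and> R m * (1 - cj m * W) = 1"
  shows "continuous_on S R"
  unfolding continuous_on_iff
proof (intro ballI allI impI)
  fix m e assume mS: "m \<in> S" and e: "(0::real) < e"
  define K where "K = norm (R m)"
  define A where "A = norm W"
  have K0: "K \<ge> 0" and A0: "A \<ge> 0" unfolding K_def A_def by simp_all
  define d where "d = min (1 / (2 * (K * A + 1))) (e / (2 * K * K * A + 1))"
  have KA0: "K * A \<ge> 0" using K0 A0 by simp
  have KKA0: "2 * K * K * A \<ge> 0" using K0 A0 by simp
  have p1: "2 * (K * A + 1) > 0" using KA0 by simp
  have p2: "2 * K * K * A + 1 > 0" using KKA0 by linarith
  have d0: "d > 0" unfolding d_def using p1 p2 e by simp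
  show "\<exists>d>0. \<forall>x'\<in>S. dist x' m < d \<longrightarrow> dist (R x') (R m) < e"
  proof (intro exI[of _ d] conjI ballI impI d0)
    fix n assume nS: "n \<in> S" and dn: "dist n m < d"
    define c where "c = cmod (n - m)"
    have c0: "c \<ge> 0" unfolding c_def by simp
    have cd: "c < d" using dn unfolding c_def by (simp add: dist_norm)
    define N where "N = norm (R n)"
    have N0: "N \<ge> 0" unfolding N_def by simp
    have id: "R n - R m = R m * (cj (n - m) * W) * R n"
      using RR[OF mS] RR[OF nS] by (intro resolvent_identity) auto
    have h1: "norm (R n - R m) \<le> K * (c * A) * N"
    proof -
      have "norm (R n - R m) \<le> norm (R m * (cj (n - m) * W)) * norm (R n)"
        unfolding id by (rule norm_mult_ineq)
      also have "\<dots> \<le> (K * norm (cj (n - m) * W)) * N"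
        unfolding K_def N_def by (intro mult_right_mono norm_mult_ineq) simp
      also have "\<dots> \<le> (K * (c * A)) * N"
        unfolding c_def A_def using K0 N0
        by (intro mult_right_mono mult_left_mono) (simp_all add: norm_cj_mult)
      finally show ?thesis .
    qed
    have h2: "K * (c * A) \<le> 1/2"
    proof -
      have "c \<le> 1 / (2 * (K * A + 1))" using cd unfolding d_def by simp
      then have "c * (2 * (K * A + 1)) \<le> 1" using KA0 by (simp add: field_simps)
      then have "2 * (c * (K * A)) \<le> 1" using c0 by (simp add: algebra_simps)
      then show ?thesis by (simp add: algebra_simps)
    qed
    have "N \<le> K + norm (R n - R m)"
      using norm_triangle_ineq[of "R m" "R n - R m"] unfolding N_def K_def by simp
    also have "\<dots> \<le> K + K * (c * A) * N" using h1 by simp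
    also have "\<dots> \<le> K + 1/2 * N" using mult_right_mono[OF h2 N0] by simp
    finally have N2: "N \<le> 2 * K" by simp
    have "norm (R n - R m) \<le> K * (c * A) * (2 * K)"
      using h1 mult_left_mono[OF N2, of "K * (c * A)"] K0 c0 A0 by simp
    also have "\<dots> = (2 * K * K * A) * c" by (simp add: algebra_simps)
    also have "\<dots> \<le> (2 * K * K * A + 1) * c" using c0 by (simp add: algebra_simps)
    also have "\<dots> < (2 * K * K * A + 1) * d" using cd p2 by (rule mult_strict_left_mono)
    also have "\<dots> \<le> e" 
    proof -
      have "d \<le> e / (2 * K * K * A + 1)" unfolding d_def by simp
      then show ?thesis using KKA0 by (simp add: field_simps)
    qed
    finally show "dist (R n) (R m) < e" by (simp add: dist_norm)
  qed
qed



definition om :: "nat \<Rightarrow> complex" where "om n = exp (2 * of_real pi * \<i> / of_nat n)"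

lemma om_pow_n: "n > 0 \<Longrightarrow> om n ^ n = 1"
  using complex_root_unity[of n 1] by (simp add: om_def)

lemma om_norm: "cmod (om n) = 1"
  by (simp add: om_def)

lemma om_pow_ne1:
  assumes "0 < m" "m < n" shows "om n ^ m \<noteq> 1"
proof -
  have "om n ^ m = exp (2 * of_real pi * \<i> * of_nat m / of_nat n)"
    unfolding om_def exp_of_nat_mult[symmetric] by (simp add: field_simps)
  moreover have "\<not> n dvd m" using assms by (auto dest: dvd_imp_le)
  ultimately show ?thesis using complex_root_unity_eq_1[of n m] assms by simp
qed

lemma om_sum:
  assumes "m < n" shows "(\<Sum>k<n. (om n ^ m) ^ k) = (if m = 0 then of_nat n else 0)"
proof (cases "m = 0")
  case True then show ?thesis by simp
next
  case False
  then have ne: "om n ^ m \<noteq> 1" using om_pow_ne1 assms by simp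
  have "(om n ^ m) ^ n = (om n ^ n) ^ m" by (simp add: power_mult[symmetric] mult.commute)
  also have "\<dots> = 1" using assms by (simp add: om_pow_n)
  finally show ?thesis using False geometric_sum[OF ne, of n] by simp
qed

lemma avg_identity:
  fixes W :: "'a::cstar_algebra"
  assumes RR: "\<And>m. cmod m \<le> r \<Longrightarrow> (1 - cj m * W) * R m = 1 \<and> R m * (1 - cj m * W) = 1"
    and n: "n > 0" and l: "cmod l \<le> r"
  shows "(1 + scaleR (1 / real n) (\<Sum>k<n. R (om n ^ k * l) - 1)) * (1 - cj (l ^ n) * W ^ n) = 1"
proof -
  define P where "P = cj (l ^ n) * W ^ n"
  define mu where "mu k = om n ^ k * l" for k
  have cm: "cmod (mu k) \<le> r" for k unfolding mu_def using l by (simp add: norm_mult norm_power om_norm)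
  have Q: "R (mu k) * (1 - P) = (\<Sum>m<n. cj (mu k ^ m) * W ^ m)" for k
  proof -
    define x where "x = cj (mu k) * W"
    have "x ^ n = cj (mu k ^ n) * W ^ n" unfolding x_def by (rule cj_mult_power)
    also have "mu k ^ n = l ^ n"
      unfolding mu_def by (simp add: power_mult_distrib power_mult[symmetric] mult.commute[of k] power_mult om_pow_n n)
    finally have xn: "x ^ n = P" unfolding P_def .
    have "R (mu k) * (1 - P) = R (mu k) * ((1 - x) * (\<Sum>m<n. x ^ m))"
      by (simp add: telescope_left xn)
    also have "\<dots> = (R (mu k) * (1 - x)) * (\<Sum>m<n. x ^ m)" by (simp add: mult.assoc)
    also have "\<dots> = (\<Sum>m<n. x ^ m)" using RR[OF cm[of k]] unfolding x_def by simp
    finally show ?thesis unfolding x_def by (simp add: cj_mult_power)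
  qed
  have sumk: "(\<Sum>k<n. mu k ^ m) = (if m = 0 then of_nat n else 0)" if "m < n" for m
  proof -
    have "(\<Sum>k<n. mu k ^ m) = (\<Sum>k<n. l ^ m * (om n ^ m) ^ k)"
      unfolding mu_def by (intro sum.cong refl) (simp add: power_mult_distrib power_mult[symmetric] mult.commute)
    also have "\<dots> = l ^ m * (\<Sum>k<n. (om n ^ m) ^ k)" by (simp add: sum_distrib_left)
    also have "\<dots> = (if m = 0 then of_nat n else 0)" using om_sum[OF that] by simp
    finally show ?thesis .
  qed
  have S: "(\<Sum>k<n. R (mu k)) * (1 - P) = of_nat n"
  proof -
    have "(\<Sum>k<n. R (mu k)) * (1 - P) = (\<Sum>k<n. \<Sum>m<n. cj (mu k ^ m) * W ^ m)"
      by (simp add: sum_distrib_right Q)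
    also have "\<dots> = (\<Sum>m<n. \<Sum>k<n. cj (mu k ^ m) * W ^ m)" by (rule sum.swap)
    also have "\<dots> = (\<Sum>m<n. cj (\<Sum>k<n. mu k ^ m) * W ^ m)"
      by (simp add: sum_distrib_right cj_sum)
    also have "\<dots> = (\<Sum>m<n. if m = 0 then of_nat n else 0)"
      by (intro sum.cong refl) (simp add: sumk cj_of_nat)
    also have "\<dots> = of_nat n" using n by simp
    finally show ?thesis .
  qed
  have sc: "scaleR (1 / real n) (of_nat n * y) = (y::'a)" for y
  proof -
    have "of_nat n * y = scaleR (real n) y"
      using scaleR_of_nat_one[of n, where 'a='a] by (metis mult_1_left mult_scaleR_left)
    then show ?thesis using n by simp
  qed
  define T where "T = (\<Sum>k<n. R (mu k))"
  have eq: "(\<Sum>k<n. R (mu k) - 1) = T - of_nat n"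
    unfolding T_def by (simp add: sum_subtractf)
  have "(1 + scaleR (1 / real n) (\<Sum>k<n. R (mu k) - 1)) * (1 - P)
      = (1 - P) + scaleR (1 / real n) (T * (1 - P) - of_nat n * (1 - P))"
    unfolding eq by (simp add: algebra_simps)
  also have "\<dots> = (1 - P) + scaleR (1 / real n) (of_nat n * P)" unfolding T_def S by (simp add: algebra_simps)
  also have "\<dots> = 1" unfolding sc by simp
  finally show ?thesis unfolding P_def mu_def .
qed



lemma Z_norms:
  fixes Z P :: "'a::cstar_algebra"
  assumes "(1 + Z) * (1 - P) = 1"
  shows "norm Z \<le> norm P + norm Z * norm P" and "norm P \<le> norm Z + norm Z * norm P"
proof -
  have "1 - P + Z - Z * P = 1" using assms by (simp add: algebra_simps)
  then have z: "Z = P + Z * P" and p: "P = Z - Z * P" by (simp_all add: algebra_simps)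
  show "norm Z \<le> norm P + norm Z * norm P"
    using z norm_triangle_ineq[of P "Z * P"] norm_mult_ineq[of Z P] by simp
  show "norm P \<le> norm Z + norm Z * norm P"
    using p norm_triangle_ineq4[of Z "Z * P"] norm_mult_ineq[of Z P] by simp
qed

lemma SR:
  fixes W :: "'a::cstar_algebra"
  assumes sa: "cstar W = W" and r1: "0 < r1"
    and inv: "\<And>m. cmod m \<le> r1 \<Longrightarrow> invertible_el (1 - cj m * W)"
    and rho: "0 \<le> rho" "rho < r1"
  shows "rho * norm W < 1"
proof -
  define R where "R m = (SOME r. (1 - cj m * W) * r = 1 \<and> r * (1 - cj m * W) = 1)" for m
  have RR: "(1 - cj m * W) * R m = 1 \<and> R m * (1 - cj m * W) = 1" if "cmod m \<le> r1" for m
    using inv[OF that] unfolding invertible_el_def R_def by (rule someI_ex)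
  have cont: "continuous_on (cball 0 r1) R"
    by (rule resolvent_cont[where W=W]) (simp add: RR)
  then have "uniformly_continuous_on (cball 0 r1) R"
    by (rule compact_uniformly_continuous) simp
  then obtain d where d: "d > 0"
    and dd: "\<And>x x'. x \<in> cball 0 r1 \<Longrightarrow> x' \<in> cball 0 r1 \<Longrightarrow> dist x' x < d \<Longrightarrow> dist (R x') (R x) < 1/4"
    unfolding uniformly_continuous_on_def by (meson zero_less_divide_1_iff zero_less_numeral)
  define d0 where "d0 = min d (r1 - rho)"
  have d00: "d0 > 0" using d rho unfolding d0_def by simp
  define Z where "Z n l = scaleR (1 / real n) (\<Sum>k<n. R (om n ^ k * l) - 1)" for n l
  have ident: "(1 + Z n l) * (1 - cj (l ^ n) * W ^ n) = 1" if "n > 0" "cmod l \<le> r1" for n l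
    unfolding Z_def by (rule avg_identity[OF _ that]) (simp add: RR)
  have zdiff: "norm (Z n l' - Z n l) \<le> 1/4"
    if n: "n > 0" and l: "cmod l \<le> r1" and l': "cmod l' \<le> r1" and ll: "cmod (l' - l) < d0" for n l l'
  proof -
    have each: "norm (R (om n ^ k * l') - R (om n ^ k * l)) \<le> 1/4" for k
    proof -
      have "dist (om n ^ k * l') (om n ^ k * l) = cmod (l' - l)"
        by (simp add: dist_norm right_diff_distrib[symmetric] norm_mult norm_power om_norm)
      then have "dist (om n ^ k * l') (om n ^ k * l) < d" using ll unfolding d0_def by simp
      moreover have "om n ^ k * l \<in> cball 0 r1" "om n ^ k * l' \<in> cball 0 r1"
        using l l' by (simp_all add: norm_mult norm_power om_norm)
      ultimately show ?thesis using dd by (fastforce simp: dist_norm)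
    qed
    have "Z n l' - Z n l = scaleR (1 / real n) (\<Sum>k<n. R (om n ^ k * l') - R (om n ^ k * l))"
      unfolding Z_def by (simp add: scaleR_diff_right[symmetric] sum_subtractf[symmetric])
    then have "norm (Z n l' - Z n l) = (1 / real n) * norm (\<Sum>k<n. R (om n ^ k * l') - R (om n ^ k * l))"
      by simp
    also have "\<dots> \<le> (1 / real n) * (\<Sum>k<n. norm (R (om n ^ k * l') - R (om n ^ k * l)))"
      by (intro mult_left_mono norm_sum) simp
    also have "\<dots> \<le> (1 / real n) * (\<Sum>k<n. 1/4)"
      by (intro mult_left_mono sum_mono each) simp
    also have "\<dots> = 1/4" using n by simp
    finally show ?thesis .
  qed
  define B where "B r \<longleftrightarrow> (\<exists>N. \<forall>n\<ge>N. r ^ n * norm (W ^ n) \<le> 1/4)" for r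
  have Bmono: "B s" if "B r" "0 \<le> s" "s \<le> r" for r s
  proof -
    obtain N where N: "\<And>n. n \<ge> N \<Longrightarrow> r ^ n * norm (W ^ n) \<le> 1/4" using \<open>B r\<close> unfolding B_def by blast
    have "s ^ n * norm (W ^ n) \<le> 1/4" if "n \<ge> N" for n
      using N[OF that] mult_right_mono[OF power_mono[OF \<open>s \<le> r\<close> \<open>0 \<le> s\<close>, of n] norm_ge_zero[of "W ^ n"]]
      by linarith
    then show ?thesis unfolding B_def by blast
  qed
  have step: "B (r + d0/4)" if Br: "B r" and r0: "0 \<le> r" and rr: "r \<le> rho" for r
  proof -
    obtain N where N: "\<And>n. n \<ge> N \<Longrightarrow> r ^ n * norm (W ^ n) \<le> 1/4" using Br unfolding B_def by blast
    define r' where "r' = r + d0/2"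
    have d0le: "d0 \<le> r1 - rho" unfolding d0_def by simp
    have r'1: "r' \<le> r1" unfolding r'_def using rr rho d0le by linarith
    have r'0: "r' > 0" unfolding r'_def using r0 d00 by simp
    have bd: "r' ^ n * norm (W ^ n) \<le> 7/5" if nN: "n \<ge> max N 1" for n
    proof -
      have n0: "n > 0" using nN by simp
      define l where "l = complex_of_real r"
      define l' where "l' = complex_of_real r'"
      have cl: "cmod l \<le> r1" unfolding l_def using r0 rr rho by simp
      have cl': "cmod l' \<le> r1" unfolding l'_def using r'0 r'1 by simp
      have dl: "cmod (l' - l) < d0" unfolding l_def l'_def r'_def using d00
        by (simp add: of_real_diff[symmetric] del: of_real_diff)
      define a where "a = norm (cj (l ^ n) * W ^ n :: 'a)"
      define a' where "a' = norm (cj (l' ^ n) * W ^ n :: 'a)"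
      have ae: "a = r ^ n * norm (W ^ n)" unfolding a_def l_def using r0
        by (simp add: norm_cj_mult_eq norm_power)
      have ae': "a' = r' ^ n * norm (W ^ n)" unfolding a'_def l'_def using r'0
        by (simp add: norm_cj_mult_eq norm_power)
      have a14: "a \<le> 1/4" unfolding ae using N nN by simp
      have a0: "a \<ge> 0" and a'0: "a' \<ge> 0" unfolding a_def a'_def by simp_all
      note zn = Z_norms[OF ident[OF n0 cl]]
      note zn' = Z_norms[OF ident[OF n0 cl']]
      have "norm (Z n l) \<le> a + norm (Z n l) * a" using zn(1) unfolding a_def .
      also have "norm (Z n l) * a \<le> norm (Z n l) * (1/4)" by (rule mult_left_mono[OF a14]) simp
      finally have z: "norm (Z n l) \<le> 1/3" using a14 by linarith
      have "norm (Z n l') \<le> norm (Z n l) + norm (Z n l' - Z n l)"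
        using norm_triangle_ineq[of "Z n l" "Z n l' - Z n l"] by simp
      also have "\<dots> \<le> 1/3 + 1/4" using z zdiff[OF n0 cl cl' dl] by linarith
      finally have z': "norm (Z n l') \<le> 7/12" by simp
      have "a' \<le> norm (Z n l') + norm (Z n l') * a'" using zn'(2) unfolding a'_def .
      also have "norm (Z n l') * a' \<le> 7/12 * a'" by (rule mult_right_mono[OF z' a'0])
      finally have "a' \<le> 7/12 + 7/12 * a'" using z' by linarith
      then have "a' \<le> 7/5" by linarith
      then show ?thesis unfolding ae' .
    qed
    define q where "q = (r + d0/4) / r'"
    have q0: "0 \<le> q" unfolding q_def using r0 d00 r'0 by simp
    have q1: "q < 1" unfolding q_def r'_def using r0 d00 by (simp add: field_simps)
    obtain N2 where N2: "q ^ N2 < 5/28" using real_arch_pow_inv[of "5/28" q] q1 by auto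
    have "(r + d0/4) ^ n * norm (W ^ n) \<le> 1/4" if nN: "n \<ge> max (max N 1) N2" for n
    proof -
      have "r + d0/4 = q * r'" unfolding q_def using r'0 by simp
      then have "(r + d0/4) ^ n * norm (W ^ n) = q ^ n * (r' ^ n * norm (W ^ n))"
        by (simp add: power_mult_distrib)
      also have "\<dots> \<le> q ^ N2 * (7/5)"
      proof (rule mult_mono)
        show "q ^ n \<le> q ^ N2" using nN q0 q1 by (intro power_decreasing) auto
        show "r' ^ n * norm (W ^ n) \<le> 7/5" using bd nN by simp
      qed (use q0 r'0 in simp_all)
      also have "\<dots> \<le> 5/28 * (7/5)" using N2 by simp
      finally show ?thesis by simp
    qed
    then show ?thesis unfolding B_def by blast
  qed
  have B0: "B 0" unfolding B_def by (rule exI[of _ 1]) (auto simp: zero_power)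
  have Bk: "B (min (real k * d0/4) rho)" for k
  proof (induct k)
    case 0 then show ?case using B0 rho by simp
  next
    case (Suc k)
    show ?case
    proof (cases "real k * d0/4 \<le> rho")
      case True
      then have h1: "B (real k * d0/4 + d0/4)" using step[of "real k * d0/4"] Suc d00 by simp
      have h2: "min (real (Suc k) * d0/4) rho \<le> real k * d0/4 + d0/4"
        by (rule min.coboundedI1) (simp add: algebra_simps)
      have h3: "0 \<le> min (real (Suc k) * d0/4) rho" using d00 rho by simp
      show ?thesis by (rule Bmono[OF h1 h3 h2])
    next
      case False
      have e1: "min (real k * d0/4) rho = rho" using False by simp
      have "real k * d0/4 \<le> real (Suc k) * d0/4" using d00 by (simp add: algebra_simps)
      then have e2: "min (real (Suc k) * d0/4) rho = rho" using False by simp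
      show ?thesis using Suc e1 e2 by simp
    qed
  qed
  obtain k where "rho / (d0/4) < real k" using reals_Archimedean2 by blast
  then have "rho \<le> real k * d0/4" using d00 by (simp add: field_simps)
  then have "B rho" using Bk[of k] by (simp add: min_absorb2)
  then obtain N where N: "\<And>n. n \<ge> N \<Longrightarrow> rho ^ n * norm (W ^ n) \<le> 1/4" unfolding B_def by blast
  have "N \<le> 2 ^ N" by (simp add: less_imp_le)
  then have "rho ^ (2 ^ N) * norm (W ^ (2 ^ N)) \<le> 1/4" by (rule N)
  then have "(rho * norm W) ^ (2 ^ N) < 1 ^ (2 ^ N)"
    by (simp add: norm_sa_pow2[OF sa] power_mult_distrib)
  then show ?thesis by (rule power_less_imp_less_base) simp
qed



lemma spec_ok:
  fixes b :: "'a::cstar_algebra"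
  assumes sa: "cstar b = b" and nb: "norm b \<le> 1"
    and c: "Im s \<noteq> 0 \<or> 1 < cmod s \<or> (\<exists>b'. b * b' = 1 \<and> b' * b = 1 \<and> cmod s * norm b' < 1)"
  shows "invertible_el (b - cj s)"
proof -
  consider "Im s \<noteq> 0" | "1 < cmod s" | b' where "b * b' = 1" "b' * b = 1" "cmod s * norm b' < 1"
    using c by blast
  then show ?thesis
  proof cases
    case 1 then show ?thesis by (rule arens[OF sa])
  next
    case 2 then show ?thesis using nb by (intro invertible_big) simp
  next
    case 3
    have "norm (cj s * b') < 1" using 3(3) norm_cj_mult[of s b'] by simp
    then have "invertible_el (1 - cj s * b')" by (rule neumann)
    moreover have "invertible_el b" using 3 unfolding invertible_el_def by blast
    ultimately have "invertible_el (b * (1 - cj s * b'))" by (intro invertible_el_mult)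
    moreover have "b * (1 - cj s * b') = b - cj s"
    proof -
      have "b * (cj s * b') = cj s * (b * b')"
        by (simp add: mult.assoc[symmetric] cj_comm[of s b, symmetric])
      then show ?thesis using 3(1) by (simp add: right_diff_distrib)
    qed
    ultimately show ?thesis by simp
  qed
qed

lemma factor_inv:
  fixes b :: "'a::cstar_algebra"
  assumes m: "m \<noteq> 0" and sq: "s ^ 2 = 1 - 1 / m"
    and i1: "invertible_el (b - cj s)" and i2: "invertible_el (b - cj (- s))"
  shows "invertible_el (1 - cj m * (1 - b * b))"
proof -
  have bc: "b * cj s = cj s * b" by (rule cj_comm[symmetric])
  have "(b - cj s) * (b - cj (- s)) = b * b - cj s * cj s"
    by (simp add: cj_minus algebra_simps bc)
  also have "cj s * cj s = (cj (s ^ 2) :: 'a)" by (simp add: cj_mult power2_eq_square)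
  finally have "(b - cj s) * (b - cj (- s)) = b * b - cj (s ^ 2)" .
  also have "\<dots> = b * b - cj (1 - 1 / m)" using sq by simp
  finally have f: "(b - cj s) * (b - cj (- s)) = b * b - cj (1 - 1 / m)" .
  have "cj m * (b * b - cj (1 - 1 / m)) = cj m * (b * b) - cj m * cj (1 - 1 / m)"
    by (rule right_diff_distrib)
  also have "cj m * cj (1 - 1 / m) = (cj (m * (1 - 1/m)) :: 'a)" by (rule cj_mult[symmetric])
  also have "m * (1 - 1/m) = m - 1" using m by (simp add: field_simps)
  finally have "cj m * ((b - cj s) * (b - cj (- s))) = 1 - cj m * (1 - b * b)"
    unfolding f by (simp add: cj_diff algebra_simps)
  moreover have "invertible_el (cj m * ((b - cj s) * (b - cj (- s))))"
    using m i1 i2 by (intro invertible_el_mult invertible_cj)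
  ultimately show ?thesis by simp
qed

lemma sa_W: "cstar b = b \<Longrightarrow> cstar (1 - b * b) = 1 - (b::'a::cstar_algebra) * b"
  by (simp add: cstar_diff cstar_one cstar_mult)

lemma real_sqrt_case:
  assumes "Im s = 0" shows "s = complex_of_real (Re s)" "cmod s = \<bar>Re s\<bar>" "s ^ 2 = complex_of_real (Re s ^ 2)"
  using assms by (simp_all add: complex_eq_iff norm_complex_def power2_eq_square)

lemma L_le:
  fixes b :: "'a::cstar_algebra"
  assumes sa: "cstar b = b" and nb: "norm b \<le> 1"
  shows "norm (1 - b * b) \<le> 1"
proof (rule ccontr)
  assume "\<not> ?thesis"
  then have gt: "norm (1 - b * b) > 1" by simp
  define rho where "rho = 1 / norm (1 - b * b)"
  have rho0: "0 \<le> rho" "rho < 1" unfolding rho_def using gt by (auto simp: divide_less_eq_1)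
  define r1 where "r1 = (rho + 1) / 2"
  have r1: "0 < r1" "rho < r1" "r1 < 1" unfolding r1_def using rho0 by simp_all
  have inv: "invertible_el (1 - cj m * (1 - b * b))" if m: "cmod m \<le> r1" for m
  proof (cases "m = 0")
    case True then show ?thesis by simp
  next
    case False
    define s where "s = csqrt (1 - 1 / m)"
    have sq: "s ^ 2 = 1 - 1 / m" unfolding s_def by simp
    have ok: "Im s \<noteq> 0 \<or> 1 < cmod s"
    proof (cases "Im s = 0")
      case True
      note rs = real_sqrt_case[OF True]
      have "1 / m = 1 - s ^ 2" using sq by simp
      also have "1 - s ^ 2 = complex_of_real (1 - Re s ^ 2)" using rs by simp
      finally have "cmod (1 / m) = \<bar>1 - Re s ^ 2\<bar>" by (simp only: norm_of_real)
      moreover have "cmod (1 / m) > 1" using m False r1 by (simp add: norm_divide field_simps)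
      ultimately have "\<bar>1 - Re s ^ 2\<bar> > 1" by simp
      then have "Re s ^ 2 > 1" by (simp add: abs_if split: if_splits)
      then have "\<bar>Re s\<bar> > 1" by (metis abs_le_square_iff abs_one not_less one_power2)
      then show ?thesis using rs by simp
    qed simp
    show ?thesis
    proof (rule factor_inv[OF False sq])
      show "invertible_el (b - cj s)" using ok by (intro spec_ok sa nb) auto
      show "invertible_el (b - cj (- s))" using ok by (intro spec_ok sa nb) auto
    qed
  qed
  have "rho * norm (1 - b * b) < 1"
    by (rule SR[OF sa_W[OF sa] r1(1) inv rho0(1) r1(2)])
  moreover have "rho * norm (1 - b * b) = 1"
  proof -
    have nz: "norm (1 - b * b) \<noteq> 0" using gt by linarith
    then show ?thesis unfolding rho_def by simp
  qed
  ultimately show False by simp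
qed



lemma L_lt:
  fixes b :: "'a::cstar_algebra"
  assumes sa: "cstar b = b" and nb: "norm b \<le> 1" and b': "b * b' = 1" "b' * b = 1"
  shows "norm (1 - b * b) < 1"
proof -
  define K where "K = norm b'"
  have K0: "K \<ge> 0" unfolding K_def by simp
  define c where "c = 1 / (K^2 + 1)"
  have Kp: "0 < K^2 + 1" using zero_le_power2[of K] by linarith
  have Kp1: "1 \<le> K^2 + 1" using zero_le_power2[of K] by linarith
  have c0: "0 < c" "c \<le> 1" unfolding c_def using Kp Kp1 by (simp_all only: divide_le_eq_1 divide_pos_pos zero_less_one) auto
  have cK: "c * (K^2 + 1) = 1" unfolding c_def using Kp by simp
  define r1 where "r1 = 1 / (1 - c/2)"
  have r1i: "1 / r1 = 1 - c/2" unfolding r1_def using c0 by simp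
  have r1: "1 < r1" "0 < r1" unfolding r1_def using c0 by (simp_all add: field_simps)
  define rho where "rho = (1 + r1) / 2"
  have rho: "0 \<le> rho" "rho < r1" "1 < rho" unfolding rho_def using r1 by simp_all
  have inv: "invertible_el (1 - cj m * (1 - b * b))" if m: "cmod m \<le> r1" for m
  proof (cases "m = 0")
    case True then show ?thesis by simp
  next
    case False
    define s where "s = csqrt (1 - 1 / m)"
    have sq: "s ^ 2 = 1 - 1 / m" unfolding s_def by simp
    have ok: "Im s \<noteq> 0 \<or> 1 < cmod s \<or> (\<exists>b'. b * b' = 1 \<and> b' * b = 1 \<and> cmod s * norm b' < 1)"
    proof (cases "Im s = 0")
      case True
      note rs = real_sqrt_case[OF True]
      define x where "x = Re s"
      have "1 / m = 1 - s ^ 2" using sq by simp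
      also have "1 - s ^ 2 = complex_of_real (1 - x ^ 2)" using rs unfolding x_def by simp
      finally have e: "cmod (1 / m) = \<bar>1 - x ^ 2\<bar>" by (simp only: norm_of_real)
      have "1 / r1 \<le> 1 / cmod m" using m False r1 by (intro divide_left_mono) auto
      then have ge: "\<bar>1 - x ^ 2\<bar> \<ge> 1 - c/2" using e r1i by (simp add: norm_divide)
      show ?thesis
      proof (cases "1 - x ^ 2 \<ge> 0")
        case True
        then have "x ^ 2 \<le> c / 2" using ge by simp
        then have "x ^ 2 * K ^ 2 \<le> (c / 2) * K ^ 2" by (rule mult_right_mono) simp
        also have "\<dots> < c * (K^2 + 1)"
        proof -
          have a1: "0 \<le> c * K^2" using c0 by simp
          have a2: "c / 2 * K^2 = (c * K^2) / 2" by simp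
          have a3: "c * (K^2 + 1) = c * K^2 + c" by (simp add: algebra_simps)
          show ?thesis unfolding a2 a3 using a1 c0 by linarith
        qed
        finally have "(\<bar>x\<bar> * K) ^ 2 < 1 ^ 2" using cK by (simp add: power_mult_distrib)
        then have "\<bar>x\<bar> * K < 1" by (rule power_less_imp_less_base) simp
        then have "cmod s * norm b' < 1" using rs unfolding x_def K_def by simp
        then show ?thesis using b' by blast
      next
        case False
        then have "x ^ 2 - 1 \<ge> 1 - c/2" using ge by simp
        then have "x ^ 2 > 1 ^ 2" using c0 by simp
        then have "1 < \<bar>x\<bar>" using power_less_imp_less_base[of 1 2 "\<bar>x\<bar>"] by simp
        then show ?thesis using rs unfolding x_def by simp
      qed
    qed simp
    show ?thesis
    proof (rule factor_inv[OF False sq])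
      show "invertible_el (b - cj s)" using ok by (intro spec_ok sa nb) auto
      have "Im (- s) \<noteq> 0 \<or> 1 < cmod (- s) \<or> (\<exists>b'. b * b' = 1 \<and> b' * b = 1 \<and> cmod (- s) * norm b' < 1)"
        using ok by simp
      then show "invertible_el (b - cj (- s))" by (intro spec_ok sa nb)
    qed
  qed
  have "rho * norm (1 - b * b) < 1"
    by (rule SR[OF sa_W[OF sa] r1(2) inv rho(1) rho(2)])
  moreover have "norm (1 - b * b) \<ge> 1 \<Longrightarrow> rho * norm (1 - b * b) \<ge> 1"
    using rho mult_mono[of 1 rho 1 "norm (1 - b * b)"] by simp
  ultimately show ?thesis by linarith
qed



lemma E_facts:
  assumes "star_subalgebra X E"
  shows E_cont: "f \<in> E \<Longrightarrow> continuous_map X euclidean f"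
    and E_zero: "(\<lambda>x. 0) \<in> E"
    and E_add: "f \<in> E \<Longrightarrow> g \<in> E \<Longrightarrow> (\<lambda>x. f x + g x) \<in> E"
    and E_mult: "f \<in> E \<Longrightarrow> g \<in> E \<Longrightarrow> (\<lambda>x. f x * g x) \<in> E"
    and E_scaleC: "f \<in> E \<Longrightarrow> (\<lambda>x. scaleC c (f x)) \<in> E"
    and E_cstar: "f \<in> E \<Longrightarrow> (\<lambda>x. cstar (f x)) \<in> E"
  using assms unfolding star_subalgebra_def by auto

lemma E_scaleR:
  assumes "star_subalgebra X E" "f \<in> E" shows "(\<lambda>x. scaleR r (f x)) \<in> E"
  using E_scaleC[OF assms, of "complex_of_real r"] by (simp add: scaleC_of_real)

lemma E_diff:
  assumes "star_subalgebra X E" "f \<in> E" "g \<in> E" shows "(\<lambda>x. f x - g x) \<in> E"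
proof -
  have "(\<lambda>x. scaleR (-1) (g x)) \<in> E" by (rule E_scaleR[OF assms(1,3)])
  then have "(\<lambda>x. f x + scaleR (-1) (g x)) \<in> E" by (rule E_add[OF assms(1,2)])
  then show ?thesis by simp
qed

lemma E_sum:
  assumes "star_subalgebra X E" "finite S" "\<And>i. i \<in> S \<Longrightarrow> f i \<in> E"
  shows "(\<lambda>x. \<Sum>i\<in>S. f i x) \<in> E"
  using assms(2,3)
proof (induct S rule: finite_induct)
  case empty then show ?case using E_zero[OF assms(1)] by simp
next
  case (insert i S)
  have "(\<lambda>x. f i x + (\<Sum>i\<in>S. f i x)) \<in> E"
    using insert by (intro E_add[OF assms(1)]) auto
  then show ?case using insert by simp
qed

lemma E_bounded:
  assumes cpt: "compact_space X" and sub: "star_subalgebra X E" and f: "f \<in> E"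
  shows "\<exists>M\<ge>1. \<forall>y\<in>topspace X. norm (f y) \<le> M"
proof -
  have "compactin euclidean (f ` topspace X)"
    using image_compactin[OF cpt[unfolded compact_space_def] E_cont[OF sub f]] .
  then have "bounded (f ` topspace X)" by (simp add: compact_imp_bounded)
  then obtain a where a: "\<forall>z\<in>f ` topspace X. norm z \<le> a" unfolding bounded_iff by blast
  show ?thesis using a by (intro exI[of _ "max a 1"]) auto
qed

lemma local_good:
  assumes cpt: "compact_space X" and sub: "star_subalgebra X (E :: ('x \<Rightarrow> 'a::cstar_algebra) set)"
    and f: "f \<in> E" and x: "x \<in> topspace X" and fx: "invertible_el (f x)"
  shows "\<exists>e\<in>E. (\<forall>y\<in>topspace X. norm (1 - e y) \<le> 1) \<and> norm (1 - e x) < 1"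
proof -
  define g where "g y = cstar (f y) * f y" for y
  have gE: "g \<in> E" unfolding g_def using E_mult[OF sub E_cstar[OF sub f] f] by simp
  obtain M where M1: "M \<ge> 1" and M: "\<And>y. y \<in> topspace X \<Longrightarrow> norm (g y) \<le> M"
    using E_bounded[OF cpt sub gE] by blast
  define b where "b y = scaleR (1 / M) (g y)" for y
  have bE: "b \<in> E" unfolding b_def using E_scaleR[OF sub gE] by simp
  define e where "e y = b y * b y" for y
  have eE: "e \<in> E" unfolding e_def using E_mult[OF sub bE bE] by simp
  have sa: "cstar (b y) = b y" for y
  proof -
    have gs: "cstar (g y) = g y" unfolding g_def by (simp add: cstar_mult cstar_cstar)
    have bb: "b y = scaleC (complex_of_real (1/M)) (g y)" unfolding b_def by (simp only: scaleC_of_real)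
    show ?thesis by (simp only: bb cstar_scaleC complex_cnj_complex_of_real gs)
  qed
  have nb: "norm (b y) \<le> 1" if "y \<in> topspace X" for y
  proof -
    have "norm (b y) = norm (g y) / M" unfolding b_def using M1 by simp
    also have "\<dots> \<le> 1" using M[OF that] M1 by simp
    finally show ?thesis .
  qed
  have le: "\<forall>y\<in>topspace X. norm (1 - e y) \<le> 1"
    unfolding e_def using L_le[OF sa nb] by blast
  have "invertible_el (g x)" unfolding g_def by (intro invertible_el_mult invertible_cstar fx)
  then have "invertible_el (cj (complex_of_real (1/M)) * g x)"
    using M1 by (intro invertible_el_mult invertible_cj) auto
  moreover have "cj (complex_of_real (1/M)) * g x = b x"
    unfolding b_def by (simp only: scaleC_cj[symmetric] scaleC_of_real)
  ultimately have "invertible_el (b x)" by simp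
  then obtain b' where b': "b x * b' = 1" "b' * b x = 1" unfolding invertible_el_def by blast
  have "norm (1 - e x) < 1" unfolding e_def using L_lt[OF sa nb[OF x] b'] .
  then show ?thesis using eE le by blast
qed



theorem lemma2p5:
  fixes X :: "'x topology" and E :: "('x \<Rightarrow> 'a::cstar_algebra) set"
  assumes "compact_space X" and "Hausdorff_space X"
    and "star_subalgebra X E"
  shows "(\<lambda>x. 1) \<in> uniform_closure X E \<longleftrightarrow>
         (\<forall>x\<in>topspace X. \<exists>f\<in>E. invertible_el (f x))"
proof
  note cpt = assms(1) and sub = assms(3)
  assume "(\<lambda>x. 1) \<in> uniform_closure X E"
  then have all: "\<forall>e>0. \<exists>f\<in>E. \<forall>x\<in>topspace X. norm (f x - 1) \<le> e"
    unfolding uniform_closure_def by simp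
  have "(1/2::real) > 0" by simp
  then have "\<exists>f\<in>E. \<forall>x\<in>topspace X. norm (f x - 1) \<le> 1/2" by (rule mp[OF spec[OF all]])
  then obtain f where f: "f \<in> E" and fb: "\<And>x. x \<in> topspace X \<Longrightarrow> norm (f x - 1) \<le> 1/2"
    by blast
  show "\<forall>x\<in>topspace X. \<exists>f\<in>E. invertible_el (f x)"
  proof (intro ballI bexI[OF _ f])
    fix x assume x: "x \<in> topspace X"
    have "norm (1 - f x) < 1" using fb[OF x] by (simp add: norm_minus_commute)
    then have "invertible_el (1 - (1 - f x))" by (rule neumann)
    then show "invertible_el (f x)" by simp
  qed
next
  note cpt = assms(1) and sub = assms(3)
  assume inv: "\<forall>x\<in>topspace X. \<exists>f\<in>E. invertible_el (f x)"
  show "(\<lambda>x. 1) \<in> uniform_closure X E"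
  proof (cases "topspace X = {}")
    case True
    then show ?thesis unfolding uniform_closure_def using E_zero[OF sub] by auto
  next
    case ne: False
    have "\<forall>x\<in>topspace X. \<exists>e. e \<in> E \<and> (\<forall>y\<in>topspace X. norm (1 - e y) \<le> 1) \<and> norm (1 - e x) < 1"
      using local_good[OF cpt sub] inv by blast
    then obtain ee where ee0: "\<forall>x\<in>topspace X. ee x \<in> E \<and> (\<forall>y\<in>topspace X. norm (1 - ee x y) \<le> 1) \<and> norm (1 - ee x x) < 1"
      by (rule bchoice[THEN exE])
    have ee: "ee x \<in> E \<and> (\<forall>y\<in>topspace X. norm (1 - ee x y) \<le> 1) \<and> norm (1 - ee x x) < 1" if "x \<in> topspace X" for x
      using ee0 that by blast
    define U where "U x = {y \<in> topspace X. norm (1 - ee x y) \<in> {..<1}}" for x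
    have Uo: "openin X (U x)" if "x \<in> topspace X" for x
    proof -
      have "continuous_map X euclideanreal (\<lambda>y. norm (1 - ee x y))"
        using E_cont[OF sub] ee[OF that] by (intro continuous_map_norm continuous_map_diff) auto
      then show ?thesis unfolding U_def by (rule openin_continuous_map_preimage) simp
    qed
    have cov: "topspace X \<subseteq> \<Union> (U ` topspace X)"
      using ee unfolding U_def by fastforce
    obtain F where F: "finite F" "F \<subseteq> U ` topspace X" "topspace X \<subseteq> \<Union> F"
      using cpt[unfolded compact_space_alt, rule_format, of "U ` topspace X"] Uo cov by blast
    obtain C where C: "C \<subseteq> topspace X" "finite C" "F = U ` C"
      using finite_subset_image[OF F(1,2)] by blast
    have Cne: "C \<noteq> {}" using C F(3) ne by auto
    define n where "n = card C"
    have n0: "n > 0" unfolding n_def using C(2) Cne by (simp add: card_gt_0_iff)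
    define h where "h y = scaleR (1 / real n) (\<Sum>x\<in>C. ee x y)" for y
    have hE: "h \<in> E" unfolding h_def
      using E_scaleR[OF sub E_sum[OF sub C(2)]] ee C(1) by blast
    have hlt: "norm (1 - h y) < 1" if y: "y \<in> topspace X" for y
    proof -
      have "scaleR (1 / real n) (of_nat n) = scaleR (1 / real n) (scaleR (real n) (1::'a))"
        by (simp only: scaleR_of_nat_one)
      also have "\<dots> = 1" using n0 by simp
      finally have "(1::'a) = scaleR (1 / real n) (of_nat n)" by (rule sym)
      also have "of_nat n = (\<Sum>x\<in>C. (1::'a))" unfolding n_def by simp
      finally have "1 - h y = scaleR (1 / real n) (\<Sum>x\<in>C. 1 - ee x y)"
        unfolding h_def by (simp add: sum_subtractf scaleR_diff_right)
      then have "norm (1 - h y) = (1 / real n) * norm (\<Sum>x\<in>C. 1 - ee x y)" by simp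
      also have "\<dots> \<le> (1 / real n) * (\<Sum>x\<in>C. norm (1 - ee x y))"
        by (intro mult_left_mono norm_sum) simp
      also have "\<dots> < (1 / real n) * (\<Sum>x\<in>C. 1)"
      proof (intro mult_strict_left_mono sum_strict_mono_ex1 C(2) ballI)
        show "norm (1 - ee x y) \<le> 1" if "x \<in> C" for x using ee[of x] C(1) that y by auto
        obtain u where "u \<in> F" "y \<in> u" using F(3) y by blast
        then show "\<exists>x\<in>C. norm (1 - ee x y) < 1" using C(3) unfolding U_def by auto
      qed (use n0 in simp)
      also have "\<dots> = 1" using n0 unfolding n_def by simp
      finally show ?thesis .
    qed
    have "compactin euclideanreal ((\<lambda>y. norm (1 - h y)) ` topspace X)"
      by (rule image_compactin[OF cpt[unfolded compact_space_def]])
         (use E_cont[OF sub hE] in \<open>intro continuous_map_norm continuous_map_diff, auto\<close>)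
    then obtain rho where rho: "rho \<in> (\<lambda>y. norm (1 - h y)) ` topspace X"
      and rmax: "\<And>y. y \<in> topspace X \<Longrightarrow> norm (1 - h y) \<le> rho"
      using compact_attains_sup[of "(\<lambda>y. norm (1 - h y)) ` topspace X"] ne by auto
    have rho1: "rho < 1" and rho0: "0 \<le> rho" using rho hlt by auto
    define P where "P k y = 1 - (1 - h y) ^ k" for k y
    have PE: "P k \<in> E" for k
    proof (induct k)
      case 0
      have "P 0 = (\<lambda>y. 0)" unfolding P_def by simp
      then show ?case using E_zero[OF sub] by simp
    next
      case (Suc k)
      have "P (Suc k) = (\<lambda>y. (P k y + h y) - P k y * h y)"
        unfolding P_def by (rule ext) (simp add: algebra_simps power_Suc2 del: power_Suc)
      moreover have "(\<lambda>y. (P k y + h y) - P k y * h y) \<in> E"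
        by (intro E_diff[OF sub] E_add[OF sub] E_mult[OF sub] Suc hE)
      ultimately show ?case by simp
    qed
    show ?thesis unfolding uniform_closure_def
    proof (intro CollectI allI impI)
      fix e :: real assume e: "e > 0"
      obtain k where k: "rho ^ k < e" using real_arch_pow_inv[OF e rho1] by blast
      show "\<exists>f\<in>E. \<forall>x\<in>topspace X. norm (f x - 1) \<le> e"
      proof (intro bexI[OF _ PE[of k]] ballI)
        fix y assume y: "y \<in> topspace X"
        have "norm (P k y - 1) = norm ((1 - h y) ^ k)" unfolding P_def by (simp add: norm_minus_commute)
        also have "\<dots> \<le> norm (1 - h y) ^ k" by (rule norm_power_le)
        also have "\<dots> \<le> rho ^ k" by (intro power_mono rmax y) simp
        finally show "norm (P k y - 1) \<le> e" using k by simp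
      qed
    qed
  qed
qed

end
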